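(* Let $n\ge1$, let $f:\{0,1\}^n\to\{0,1\}^n$ be a Boolean model, and let $h$ be a multivalued refinement of $f$ on $X=\prod_{j=1}^n\{0,1,\dots,m_j\}$ built by the threshold construction described in the context. Let $J=\{j: m_j>1\}$ and suppose no component $g_j$ with $j\in J$ is self-inhibited. For a Boolean state $\omega$, let $\omega'\in X$ be obtained from $\omega$ by replacing, for each $j\in J$, the coordinate $\omega_j$ by $m_j$ whenever $\omega_j=1$. (1) If $\omega$ is a fixed point of $f$, then $\omega'$ is a fixed point of $h$; moreover every fixed point of $h$ is of the form $\omega'$ for some fixed point $\omega$ of $f$. (2) If the attractors of the asynchronous dynamics of $f$ are exactly $l$ fixed points $\omega^{(1)},\dots,\omega^{(l)}$, then $\omega'^{(1)},\dots,\omega'^{(l)}$ are the only attractors of the asynchronous dynamics of $h$.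
   Context: Asynchronous dynamics of a map $h:X\to X$ ($X=\prod_j\{0,\dots,m_j\}$, $h_j(x)-x_j\in\{-1,0,1\}$): a transition $x\to y$ exists if there is $i_0$ with $x_{i_0}\neq h_{i_0}(x)$, $y_{i_0}=x_{i_0}+\mathrm{sign}(h_{i_0}(x)-x_{i_0})$, $y_j=x_j$ otherwise. The attractors are the terminal strongly connected components of this state transition graph; a fixed point is a state $x$ with $h(x)=x$. For $x\in X$, $\alpha(x)=\{x'\in\{0,1\}^n:\forall j,\ (x_j=0\Rightarrow x'_j=0),(x_j=m_j\Rightarrow x'_j=1)\}$. A multivalued model $h$ is a refinement of $f$ if for all $x\in X$, $j$: $h_j(x)<x_j\Rightarrow\exists x'\in\alpha(x), f_j(x')<x'_j$ and $h_j(x)>x_j\Rightarrow\exists x'\in\alpha(x), f_j(x')>x'_j$. Threshold construction: write each $f_{j_0}$ in a shortest disjunctive normal form of literals $x_j$ or $\neg x_j$; for each literal whose variable $j$ has $m_j>1$, choose $s\in\{0,\dots,m_j-1\}$ and replace $x_j$ by $x_j\ge s+1$, $\neg x_j$ by $x_j<s+1$; set $\mathcal H_{j_0}(x)=+1$ if the resulting formula is true at $x\in X$ and $-1$ otherwise, and $h_j(x)=\max(0,\min(m_j,x_j+\mathcal H_j(x)))$. Component $g_j$ is self-inhibited if $\neg x_j$ occurs in the shortest DNF of $f_j$. *)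

theory Defs
  imports Main
begin

text \<open>Components are indexed by 0..n-1. A state is a function nat => nat that
  vanishes outside {0..<n}. The state space X = prod_j {0..m_j}.\<close>

definition state_space :: "(nat \<Rightarrow> nat) \<Rightarrow> nat \<Rightarrow> (nat \<Rightarrow> nat) set" where
  "state_space m n = {x. (\<forall>j<n. x j \<le> m j) \<and> (\<forall>j\<ge>n. x j = 0)}"

abbreviation bool_states :: "nat \<Rightarrow> (nat \<Rightarrow> nat) set" where
  "bool_states n \<equiv> state_space (\<lambda>_. 1) n"

definition async_step :: "(nat \<Rightarrow> nat) \<Rightarrow> nat \<Rightarrow> ((nat \<Rightarrow> nat) \<Rightarrow> nat \<Rightarrow> nat)
    \<Rightarrow> (nat \<Rightarrow> nat) \<Rightarrow> (nat \<Rightarrow> nat) \<Rightarrow> bool" where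
  "async_step m n h x y \<longleftrightarrow> x \<in> state_space m n \<and>
     (\<exists>i<n. x i \<noteq> h x i \<and>
        y = x(i := (if x i < h x i then x i + 1 else x i - 1)))"

abbreviation reach where
  "reach m n h \<equiv> (async_step m n h)\<^sup>*\<^sup>*"

definition is_attractor :: "(nat \<Rightarrow> nat) \<Rightarrow> nat \<Rightarrow> ((nat \<Rightarrow> nat) \<Rightarrow> nat \<Rightarrow> nat)
    \<Rightarrow> (nat \<Rightarrow> nat) set \<Rightarrow> bool" where
  "is_attractor m n h A \<longleftrightarrow> A \<noteq> {} \<and> A \<subseteq> state_space m n \<and>
     (\<forall>x\<in>A. \<forall>y\<in>A. reach m n h x y) \<and>
     (\<forall>x\<in>A. \<forall>y. reach m n h x y \<longrightarrow> y \<in> A)"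

definition attractors :: "(nat \<Rightarrow> nat) \<Rightarrow> nat \<Rightarrow> ((nat \<Rightarrow> nat) \<Rightarrow> nat \<Rightarrow> nat)
    \<Rightarrow> (nat \<Rightarrow> nat) set set" where
  "attractors m n h = {A. is_attractor m n h A}"

definition is_fixed_point :: "(nat \<Rightarrow> nat) \<Rightarrow> nat \<Rightarrow> ((nat \<Rightarrow> nat) \<Rightarrow> nat \<Rightarrow> nat)
    \<Rightarrow> (nat \<Rightarrow> nat) \<Rightarrow> bool" where
  "is_fixed_point m n h x \<longleftrightarrow> x \<in> state_space m n \<and> (\<forall>j<n. h x j = x j)"

text \<open>Boolean DNF: list of clauses; a clause is a list of literals (j, True) = x_j,
  (j, False) = not x_j.\<close>
type_synonym dnf = "(nat \<times> bool) list list"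

definition eval_dnf :: "dnf \<Rightarrow> (nat \<Rightarrow> nat) \<Rightarrow> bool" where
  "eval_dnf D x \<longleftrightarrow> (\<exists>C\<in>set D. \<forall>(j, b)\<in>set C. (x j = 1) = b)"

definition dnf_vars_below :: "nat \<Rightarrow> dnf \<Rightarrow> bool" where
  "dnf_vars_below n D \<longleftrightarrow> (\<forall>C\<in>set D. \<forall>(j, b)\<in>set C. j < n)"

definition dnf_size :: "dnf \<Rightarrow> nat" where
  "dnf_size D = sum_list (map length D)"

definition represents :: "nat \<Rightarrow> dnf \<Rightarrow> ((nat \<Rightarrow> nat) \<Rightarrow> nat) \<Rightarrow> bool" where
  "represents n D g \<longleftrightarrow> dnf_vars_below n D \<and>
     (\<forall>x\<in>bool_states n. (g x = 1) \<longleftrightarrow> eval_dnf D x)"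

definition is_shortest_dnf :: "nat \<Rightarrow> dnf \<Rightarrow> ((nat \<Rightarrow> nat) \<Rightarrow> nat) \<Rightarrow> bool" where
  "is_shortest_dnf n D g \<longleftrightarrow> represents n D g \<and>
     (\<forall>D'. represents n D' g \<longrightarrow> dnf_size D \<le> dnf_size D')"

text \<open>Threshold DNF: literals (j, b, s); (j,True,s) means x_j >= s+1,
  (j,False,s) means x_j < s+1.\<close>
type_synonym thr_dnf = "(nat \<times> bool \<times> nat) list list"

definition underlying_dnf :: "thr_dnf \<Rightarrow> dnf" where
  "underlying_dnf T = map (map (\<lambda>(j, b, s). (j, b))) T"

definition eval_thr :: "thr_dnf \<Rightarrow> (nat \<Rightarrow> nat) \<Rightarrow> bool" where
  "eval_thr T x \<longleftrightarrow> (\<exists>C\<in>set T. \<forall>(j, b, s)\<in>set C. (s + 1 \<le> x j) = b)"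

text \<open>Thresholds admissible: s in {0..m_j-1} (for m_j = 1 this forces s = 0,
  i.e. the literal is unchanged).\<close>
definition thresholds_ok :: "(nat \<Rightarrow> nat) \<Rightarrow> thr_dnf \<Rightarrow> bool" where
  "thresholds_ok m T \<longleftrightarrow> (\<forall>C\<in>set T. \<forall>(j, b, s)\<in>set C. s < m j)"

text \<open>h_j(x) = max(0, min(m_j, x_j + H_j(x))) with H_j = +1 / -1.\<close>
definition thr_map :: "(nat \<Rightarrow> nat) \<Rightarrow> (nat \<Rightarrow> thr_dnf) \<Rightarrow> (nat \<Rightarrow> nat) \<Rightarrow> nat \<Rightarrow> nat" where
  "thr_map m T x j = (if eval_thr (T j) x then min (m j) (x j + 1) else x j - 1)"

definition alpha :: "(nat \<Rightarrow> nat) \<Rightarrow> nat \<Rightarrow> (nat \<Rightarrow> nat) \<Rightarrow> (nat \<Rightarrow> nat) set" where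
  "alpha m n x = {x' \<in> bool_states n. \<forall>j<n. (x j = 0 \<longrightarrow> x' j = 0) \<and> (x j = m j \<longrightarrow> x' j = 1)}"

definition is_refinement :: "(nat \<Rightarrow> nat) \<Rightarrow> nat \<Rightarrow> ((nat \<Rightarrow> nat) \<Rightarrow> nat \<Rightarrow> nat)
    \<Rightarrow> ((nat \<Rightarrow> nat) \<Rightarrow> nat \<Rightarrow> nat) \<Rightarrow> bool" where
  "is_refinement m n h f \<longleftrightarrow> (\<forall>x\<in>state_space m n. \<forall>j<n.
     (h x j < x j \<longrightarrow> (\<exists>x'\<in>alpha m n x. f x' j < x' j)) \<and>
     (h x j > x j \<longrightarrow> (\<exists>x'\<in>alpha m n x. f x' j > x' j)))"

definition self_inhibited :: "dnf \<Rightarrow> nat \<Rightarrow> bool" where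
  "self_inhibited D j \<longleftrightarrow> (\<exists>C\<in>set D. (j, False) \<in> set C)"

definition lift_state :: "(nat \<Rightarrow> nat) \<Rightarrow> (nat \<Rightarrow> nat) \<Rightarrow> nat \<Rightarrow> nat" where
  "lift_state m \<omega> = (\<lambda>j. if \<omega> j = 1 then m j else \<omega> j)"

end

theory Submission
  imports Defs
begin

definition noneg :: "thr_dnf \<Rightarrow> nat \<Rightarrow> bool" where
  "noneg TT j \<longleftrightarrow> (\<forall>C\<in>set TT. \<forall>(k,b,s)\<in>set C. k = j \<longrightarrow> b)"

lemma ss_step:
  assumes "\<forall>x\<in>state_space m n. \<forall>j<n. g x j \<le> m j" "async_step m n g x y"
  shows "y \<in> state_space m n"
proof -
  from assms(2) obtain i where x: "x \<in> state_space m n" "i < n" "x i \<noteq> g x i"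
    and y: "y = x(i := (if x i < g x i then x i + 1 else x i - 1))"
    unfolding async_step_def by blast
  have gi: "g x i \<le> m i" using assms(1) x by blast
  have "y j \<le> m j" if "j < n" for j
  proof (cases "j = i")
    case True
    then show ?thesis using y gi x(1) that unfolding state_space_def by auto
  next
    case False
    then show ?thesis using y x(1) that unfolding state_space_def by auto
  qed
  moreover have "y j = 0" if "n \<le> j" for j
    using that x(1,2) y unfolding state_space_def by auto
  ultimately show ?thesis unfolding state_space_def by blast
qed

lemma ss_reach:
  assumes "\<forall>x\<in>state_space m n. \<forall>j<n. g x j \<le> m j" "reach m n g x y" "x \<in> state_space m n"
  shows "y \<in> state_space m n"
  using assms(2,3) by (induction rule: rtranclp_induct) (auto intro: ss_step[OF assms(1)])

lemma fp_reach:
  assumes "is_fixed_point m n g x" "reach m n g x y" shows "y = x"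
  using assms(2) by (induction rule: rtranclp_induct)
    (use assms(1) in \<open>auto simp: async_step_def is_fixed_point_def\<close>)

lemma mono_eval:
  assumes "noneg TT j" "eval_thr TT x" "x j \<le> y j" "\<forall>l. l \<noteq> j \<longrightarrow> x l = y l"
  shows "eval_thr TT y"
proof -
  from assms(2) obtain C where C: "C \<in> set TT" "\<forall>(k,b,s)\<in>set C. (s+1 \<le> x k) = b"
    unfolding eval_thr_def by blast
  have "(s+1 \<le> y k) = b" if "(k,b,s) \<in> set C" for k b s
  proof (cases "k = j")
    case True
    then have b using assms(1) C(1) that unfolding noneg_def by fastforce
    then show ?thesis using C(2) that assms(3) True by fastforce
  next
    case False
    then show ?thesis using C(2) that assms(4) by fastforce
  qed
  then show ?thesis unfolding eval_thr_def using C(1) by fastforce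
qed

lemma evalA:
  assumes "\<omega> \<in> bool_states n" "\<forall>C\<in>set TT. \<forall>(k,b,s)\<in>set C. s < m k"
  shows "eval_thr TT (lift_state m \<omega>) = eval_dnf (underlying_dnf TT) \<omega>"
proof -
  have w: "\<omega> k \<le> 1" for k using assms(1) unfolding state_space_def
    by (cases "k < n") auto
  have lit: "(s + 1 \<le> lift_state m \<omega> k) = (\<omega> k = 1)" if "s < m k" for s k
    using w[of k] that unfolding lift_state_def by auto
  have "eval_thr TT (lift_state m \<omega>) = (\<exists>C\<in>set TT. \<forall>(k,b,s)\<in>set C. (\<omega> k = 1) = b)"
    unfolding eval_thr_def
  proof (rule bex_cong[OF refl])
    fix C assume C: "C \<in> set TT"
    show "(\<forall>(k,b,s)\<in>set C. (s + 1 \<le> lift_state m \<omega> k) = b) = (\<forall>(k,b,s)\<in>set C. (\<omega> k = 1) = b)"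
    proof (rule ball_cong[OF refl])
      fix p assume p: "p \<in> set C"
      obtain k b s where pk: "p = (k,b,s)" by (cases p)
      have "s < m k" using assms(2) C p pk by fastforce
      then show "(case p of (k,b,s) \<Rightarrow> (s + 1 \<le> lift_state m \<omega> k) = b) = (case p of (k,b,s) \<Rightarrow> (\<omega> k = 1) = b)"
        using lit pk by simp
    qed
  qed
  also have "\<dots> = eval_dnf (underlying_dnf TT) \<omega>"
    unfolding eval_dnf_def underlying_dnf_def by (simp add: split_beta)
  finally show ?thesis .
qed


lemma thr_le: "x \<in> state_space m n \<Longrightarrow> j < n \<Longrightarrow> thr_map m T x j \<le> m j"
  unfolding thr_map_def state_space_def by auto

lemma raise:
  assumes "j < n" "x \<in> state_space m n" "eval_thr (T j) x" "1 < m j \<longrightarrow> noneg (T j) j"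
  shows "reach m n (thr_map m T) x (x(j := m j))"
proof -
  have "\<forall>x. m j - x j = d \<longrightarrow> x \<in> state_space m n \<longrightarrow> eval_thr (T j) x
          \<longrightarrow> reach m n (thr_map m T) x (x(j := m j))" for d
  proof (induction d)
    case 0
    show ?case
    proof (intro allI impI)
      fix x assume a: "m j - x j = 0" "x \<in> state_space m n"
      then have "x j = m j" using assms(1) unfolding state_space_def by auto
      then have "x(j := m j) = x" by auto
      then show "reach m n (thr_map m T) x (x(j := m j))" by simp
    qed
  next
    case (Suc d)
    show ?case
    proof (intro allI impI)
      fix x assume a: "m j - x j = Suc d" "x \<in> state_space m n" "eval_thr (T j) x"
      define x1 where "x1 = x(j := x j + 1)"
      have hx: "thr_map m T x j = x j + 1" using a unfolding thr_map_def by auto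
      have st: "async_step m n (thr_map m T) x x1"
        unfolding async_step_def x1_def using a(2) assms(1) hx by auto
      have x1s: "x1 \<in> state_space m n"
        using ss_step[OF _ st] thr_le by blast
      have e: "x1(j := m j) = x(j := m j)" unfolding x1_def by simp
      show "reach m n (thr_map m T) x (x(j := m j))"
      proof (cases "x j + 1 = m j")
        case True
        then have "x1 = x(j := m j)" unfolding x1_def by simp
        then show ?thesis using st by auto
      next
        case False
        then have "1 < m j" using a(1) by auto
        then have "eval_thr (T j) x1"
          using mono_eval[of "T j" j x x1] assms(4) a(3) unfolding x1_def by auto
        moreover have "m j - x1 j = d" using a(1) unfolding x1_def by auto
        ultimately have "reach m n (thr_map m T) x1 (x1(j := m j))"
          using Suc.IH x1s by blast
        then show ?thesis using st e by (metis converse_rtranclp_into_rtranclp)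
      qed
    qed
  qed
  then show ?thesis using assms by blast
qed

lemma lower:
  assumes "j < n" "x \<in> state_space m n" "\<not> eval_thr (T j) x" "1 < m j \<longrightarrow> noneg (T j) j"
  shows "reach m n (thr_map m T) x (x(j := 0))"
proof -
  have "\<forall>x. x j = d \<longrightarrow> x \<in> state_space m n \<longrightarrow> \<not> eval_thr (T j) x
          \<longrightarrow> reach m n (thr_map m T) x (x(j := 0))" for d
  proof (induction d)
    case 0
    show ?case
    proof (intro allI impI)
      fix x :: "nat \<Rightarrow> nat" assume a: "x j = 0"
      then have "x(j := 0) = x" by auto
      then show "reach m n (thr_map m T) x (x(j := 0))" by simp
    qed
  next
    case (Suc d)
    show ?case
    proof (intro allI impI)
      fix x assume a: "x j = Suc d" "x \<in> state_space m n" "\<not> eval_thr (T j) x"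
      define x1 where "x1 = x(j := d)"
      have hx: "thr_map m T x j = d" using a unfolding thr_map_def by auto
      have st: "async_step m n (thr_map m T) x x1"
        unfolding async_step_def x1_def using a(1,2) assms(1) hx by auto
      have x1s: "x1 \<in> state_space m n"
        using ss_step[OF _ st] thr_le by blast
      have e: "x1(j := 0) = x(j := 0)" unfolding x1_def by simp
      show "reach m n (thr_map m T) x (x(j := 0))"
      proof (cases "d = 0")
        case True
        then have "x1 = x(j := 0)" unfolding x1_def by simp
        then show ?thesis using st by auto
      next
        case False
        then have "1 < m j" using a(1,2) assms(1) unfolding state_space_def by auto
        then have "\<not> eval_thr (T j) x1"
          using mono_eval[of "T j" j x1 x] assms(4) a(1,3) unfolding x1_def by auto
        moreover have "x1 j = d" unfolding x1_def by auto
        ultimately have "reach m n (thr_map m T) x1 (x1(j := 0))"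
          using Suc.IH x1s by blast
        then show ?thesis using st e by (metis converse_rtranclp_into_rtranclp)
      qed
    qed
  qed
  then show ?thesis using assms by blast
qed

lemma push:
  assumes "\<forall>j<n. 1 < m j \<longrightarrow> noneg (T j) j"
  shows "x \<in> state_space m n \<Longrightarrow> \<forall>k. p \<le> k \<and> k < n \<longrightarrow> x k = 0 \<or> x k = m k \<Longrightarrow>
    \<exists>y. reach m n (thr_map m T) x y \<and> y \<in> state_space m n \<and> (\<forall>k<n. y k = 0 \<or> y k = m k)"
proof (induction p arbitrary: x)
  case 0
  then show ?case by auto
next
  case (Suc p)
  show ?case
  proof (cases "p < n")
    case False
    then have "\<forall>k. p \<le> k \<and> k < n \<longrightarrow> x k = 0 \<or> x k = m k" by auto
    then show ?thesis using Suc.IH Suc.prems(1) by blast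
  next
    case True
    have nnp: "1 < m p \<longrightarrow> noneg (T p) p" using assms True by blast
    obtain x' where x': "reach m n (thr_map m T) x x'" "x' = x(p := m p) \<or> x' = x(p := 0)"
    proof (cases "eval_thr (T p) x")
      case True
      then show ?thesis using that raise[where T=T and m=m, OF \<open>p < n\<close> Suc.prems(1) True nnp] by blast
    next
      case False
      then show ?thesis using that lower[where T=T and m=m, OF \<open>p < n\<close> Suc.prems(1) False nnp] by blast
    qed
    have x's: "x' \<in> state_space m n" using ss_reach[OF _ x'(1) Suc.prems(1)] thr_le by blast
    have "x' k = 0 \<or> x' k = m k" if "p \<le> k" "k < n" for k
    proof (cases "k = p")
      case True
      then show ?thesis using x'(2) by auto
    next
      case False
      then have "Suc p \<le> k" using that by simp
      then have "x k = 0 \<or> x k = m k" using Suc.prems(2) that by blast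
      then show ?thesis using x'(2) False by auto
    qed
    then have "\<forall>k. p \<le> k \<and> k < n \<longrightarrow> x' k = 0 \<or> x' k = m k" by blast
    then obtain y where "reach m n (thr_map m T) x' y \<and> y \<in> state_space m n \<and> (\<forall>k<n. y k = 0 \<or> y k = m k)"
      using Suc.IH x's by blast
    then show ?thesis using x'(1) by (meson rtranclp_trans)
  qed
qed

lemma fin_bool: "finite (bool_states n)"
proof -
  let ?F = "\<lambda>xs k. if k < length xs then xs ! k else (0::nat)"
  have "bool_states n \<subseteq> ?F ` {xs. set xs \<subseteq> {0,1} \<and> length xs = n}"
  proof
    fix x assume x: "x \<in> bool_states n"
    have "x = ?F (map x [0..<n])" using x unfolding state_space_def by auto
    moreover have "set (map x [0..<n]) \<subseteq> {0,1}" using x unfolding state_space_def by auto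
    ultimately show "x \<in> ?F ` {xs. set xs \<subseteq> {0,1} \<and> length xs = n}" by force
  qed
  moreover have "finite {xs. set xs \<subseteq> {0::nat,1} \<and> length xs = n}"
    by (rule finite_lists_length_eq) simp
  ultimately show ?thesis by (meson finite_imageI finite_subset)
qed


lemma exists_attr:
  assumes fin: "finite (state_space m n)" and bd: "\<forall>x\<in>state_space m n. \<forall>j<n. g x j \<le> m j"
    and x: "x \<in> state_space m n"
  shows "\<exists>A. is_attractor m n g A \<and> A \<subseteq> {y. reach m n g x y}"
proof -
  let ?R = "\<lambda>y. {z. reach m n g y z}"
  have RX: "?R y \<subseteq> state_space m n" if "y \<in> state_space m n" for y
    using ss_reach[OF bd _ that] by blast
  obtain y where y: "reach m n g x y" and ymin: "\<forall>y'. reach m n g x y' \<longrightarrow> card (?R y) \<le> card (?R y')"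
    using ex_has_least_nat[of "\<lambda>y. reach m n g x y" x "\<lambda>y. card (?R y)"] by auto
  have yX: "y \<in> state_space m n" using ss_reach[OF bd y x] .
  have att: "is_attractor m n g (?R y)"
    unfolding is_attractor_def
  proof (intro conjI ballI allI impI)
    show "?R y \<noteq> {}" by auto
    show "?R y \<subseteq> state_space m n" using RX[OF yX] .
  next
    fix a b assume a: "a \<in> ?R y" and b: "b \<in> ?R y"
    have sub: "?R a \<subseteq> ?R y" using a by (auto intro: rtranclp_trans)
    have "card (?R y) \<le> card (?R a)" using ymin a y by (auto intro: rtranclp_trans)
    moreover have "finite (?R y)" using RX[OF yX] fin finite_subset by blast
    ultimately have "?R a = ?R y" using sub by (meson card_seteq)
    then show "reach m n g a b" using b by blast
  next
    fix a b assume "a \<in> ?R y" "reach m n g a b"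
    then show "b \<in> ?R y" by (auto intro: rtranclp_trans)
  qed
  moreover have "?R y \<subseteq> {z. reach m n g x z}" using y by (auto intro: rtranclp_trans)
  ultimately show ?thesis by blast
qed

lemma extreme_lift:
  assumes "y \<in> state_space m n" "\<forall>k<n. y k = 0 \<or> y k = m k" "\<forall>j<n. m j \<ge> 1"
  shows "\<exists>\<omega>\<in>bool_states n. y = lift_state m \<omega>"
proof -
  define \<omega> where "\<omega> = (\<lambda>k. if y k = 0 then 0 else 1::nat)"
  have "\<omega> \<in> bool_states n" using assms(1) unfolding \<omega>_def state_space_def by auto
  moreover have "y = lift_state m \<omega>"
  proof
    fix k show "y k = lift_state m \<omega> k"
      using assms unfolding \<omega>_def lift_state_def state_space_def
      by (cases "k < n") auto
  qed
  ultimately show ?thesis by blast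
qed

theorem proposition2:
  fixes n :: nat and m :: "nat \<Rightarrow> nat"
    and f :: "(nat \<Rightarrow> nat) \<Rightarrow> nat \<Rightarrow> nat"
    and T :: "nat \<Rightarrow> thr_dnf"
    and h :: "(nat \<Rightarrow> nat) \<Rightarrow> nat \<Rightarrow> nat"
  assumes n_pos: "n \<ge> 1"
    and m_pos: "\<forall>j<n. m j \<ge> 1"
    and f_bool: "\<forall>x\<in>bool_states n. \<forall>j<n. f x j \<le> 1"
    and shortest: "\<forall>j<n. is_shortest_dnf n (underlying_dnf (T j)) (\<lambda>x. f x j)"
    and thr: "\<forall>j<n. thresholds_ok m (T j)"
    and h_def: "h = thr_map m T"
    and refines: "is_refinement m n h f"
    and no_self_inh: "\<forall>j<n. 1 < m j \<longrightarrow> \<not> self_inhibited (underlying_dnf (T j)) j"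
  shows "(\<forall>\<omega>. is_fixed_point (\<lambda>_. 1) n f \<omega> \<longrightarrow> is_fixed_point m n h (lift_state m \<omega>))
       \<and> (\<forall>x. is_fixed_point m n h x \<longrightarrow>
              (\<exists>\<omega>. is_fixed_point (\<lambda>_. 1) n f \<omega> \<and> x = lift_state m \<omega>))
       \<and> (\<forall>W. attractors (\<lambda>_. 1) n f = (\<lambda>\<omega>. {\<omega>}) ` W \<longrightarrow>
              attractors m n h = (\<lambda>\<omega>. {lift_state m \<omega>}) ` W)"
proof -
  let ?X = "state_space m n"
  have repr: "\<forall>j<n. represents n (underlying_dnf (T j)) (\<lambda>x. f x j)"
    using shortest unfolding is_shortest_dnf_def by blast
  have lits: "\<forall>j<n. \<forall>C\<in>set (T j). \<forall>(k,b,s)\<in>set C. s < m k"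
    using thr unfolding thresholds_ok_def by blast
  have evf: "eval_thr (T j) (lift_state m \<omega>) = (f \<omega> j = 1)" if "j < n" "\<omega> \<in> bool_states n" for j \<omega>
    using evalA[OF that(2)] lits repr that unfolding represents_def by auto
  have nn: "\<forall>j<n. 1 < m j \<longrightarrow> noneg (T j) j"
  proof (intro allI impI)
    fix j assume j: "j < n" "1 < m j"
    let ?g = "\<lambda>(j::nat, b::bool, s::nat). (j, b)"
    have ns: "\<not> (\<exists>C\<in>set (map (map ?g) (T j)). (j, False) \<in> set C)"
      using no_self_inh j unfolding self_inhibited_def underlying_dnf_def by blast
    show "noneg (T j) j" unfolding noneg_def
    proof (intro ballI)
      fix C p assume C: "C \<in> set (T j)" and p: "p \<in> set C"
      obtain k b s where pk: "p = (k, b, s)" by (cases p)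
      show "case p of (k, b, s) \<Rightarrow> k = j \<longrightarrow> b"
      proof (cases "k = j \<and> \<not> b")
        case True
        then have "(j, False) \<in> set (map ?g C)" using p pk by force
        moreover have "map ?g C \<in> set (map (map ?g) (T j))" using C by simp
        ultimately show ?thesis using ns by blast
      next
        case False
        then show ?thesis using pk by auto
      qed
    qed
  qed
  have hb: "\<forall>x\<in>?X. \<forall>j<n. h x j \<le> m j" using thr_le h_def by blast
  have wle: "\<omega> k \<le> 1" if "\<omega> \<in> bool_states n" for \<omega> k
    using that unfolding state_space_def by (cases "k < n") auto
  have liftX: "lift_state m \<omega> \<in> ?X" if "\<omega> \<in> bool_states n" for \<omega>
    using that m_pos unfolding state_space_def lift_state_def by auto
  have P1: "is_fixed_point m n h (lift_state m \<omega>)" if fp: "is_fixed_point (\<lambda>_. 1) n f \<omega>" for \<omega>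
  proof -
    have w: "\<omega> \<in> bool_states n" using fp unfolding is_fixed_point_def by blast
    have "h (lift_state m \<omega>) j = lift_state m \<omega> j" if j: "j < n" for j
    proof (cases "\<omega> j = 1")
      case True
      then have "f \<omega> j = 1" using fp j unfolding is_fixed_point_def by auto
      then show ?thesis using evf[OF j w] True unfolding h_def thr_map_def lift_state_def by auto
    next
      case False
      then have "\<omega> j = 0" using wle[OF w, of j] by auto
      then have "f \<omega> j = 0" using fp j unfolding is_fixed_point_def by auto
      then show ?thesis using evf[OF j w] \<open>\<omega> j = 0\<close> unfolding h_def thr_map_def lift_state_def by auto
    qed
    then show ?thesis using liftX[OF w] unfolding is_fixed_point_def by blast
  qed
  have P2: "\<exists>\<omega>. is_fixed_point (\<lambda>_. 1) n f \<omega> \<and> x = lift_state m \<omega>" if fp: "is_fixed_point m n h x" for x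
  proof -
    have xX: "x \<in> ?X" using fp unfolding is_fixed_point_def by blast
    have xe: "\<forall>k<n. x k = 0 \<or> x k = m k"
    proof (intro allI impI)
      fix k assume k: "k < n"
      have "thr_map m T x k = x k" using fp k h_def unfolding is_fixed_point_def by auto
      then show "x k = 0 \<or> x k = m k" unfolding thr_map_def by (auto split: if_splits)
    qed
    obtain \<omega> where w: "\<omega> \<in> bool_states n" and xw: "x = lift_state m \<omega>"
      using extreme_lift[OF xX xe m_pos] by blast
    have "f \<omega> j = \<omega> j" if j: "j < n" for j
    proof -
      have hj: "thr_map m T x j = x j" using fp j h_def unfolding is_fixed_point_def by auto
      have e: "eval_thr (T j) x = (f \<omega> j = 1)" using evf[OF j w] xw by simp
      have fl: "f \<omega> j \<le> 1" using f_bool w j by blast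
      have wl: "\<omega> j \<le> 1" using wle[OF w] .
      have mj: "m j \<ge> 1" using m_pos j by auto
      show ?thesis
      proof (cases "\<omega> j = 1")
        case True
        then have "x j = m j" using xw unfolding lift_state_def by auto
        then have "eval_thr (T j) x" using hj mj unfolding thr_map_def by (auto split: if_splits)
        then show ?thesis using e True by auto
      next
        case False
        then have "x j = 0" "\<omega> j = 0" using xw wl unfolding lift_state_def by auto
        then have "\<not> eval_thr (T j) x" using hj mj unfolding thr_map_def by (auto split: if_splits)
        then show ?thesis using e fl \<open>\<omega> j = 0\<close> by auto
      qed
    qed
    then show ?thesis using w xw unfolding is_fixed_point_def by blast
  qed
  have simul: "reach m n h (lift_state m a) (lift_state m b)" if "reach (\<lambda>_. 1) n f a b" for a b
    using that
  proof (induction rule: rtranclp_induct)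
    case base
    then show ?case by simp
  next
    case (step b c)
    from step.hyps(2) obtain i where b: "b \<in> bool_states n" and i: "i < n" "b i \<noteq> f b i"
      and c: "c = b(i := (if b i < f b i then b i + 1 else b i - 1))"
      unfolding async_step_def by blast
    have fl: "f b i \<le> 1" using f_bool b i by blast
    have bl: "b i \<le> 1" using wle[OF b] .
    have "reach m n h (lift_state m b) (lift_state m c)"
    proof (cases "b i < f b i")
      case True
      then have "b i = 0" "f b i = 1" "c = b(i := 1)" using fl bl c by auto
      then have "eval_thr (T i) (lift_state m b)" using evf[OF i(1) b] by simp
      from raise[where T=T and m=m, OF i(1) liftX[OF b] this] nn i(1)
      have "reach m n h (lift_state m b) ((lift_state m b)(i := m i))" using h_def by simp
      moreover have "(lift_state m b)(i := m i) = lift_state m c"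
        using \<open>c = b(i := 1)\<close> unfolding lift_state_def by auto
      ultimately show ?thesis by simp
    next
      case False
      then have "b i = 1" "f b i = 0" "c = b(i := 0)" using fl bl c i(2) by auto
      then have "\<not> eval_thr (T i) (lift_state m b)" using evf[OF i(1) b] by simp
      from lower[where T=T and m=m, OF i(1) liftX[OF b] this] nn i(1)
      have "reach m n h (lift_state m b) ((lift_state m b)(i := 0))" using h_def by simp
      moreover have "(lift_state m b)(i := 0) = lift_state m c"
        using \<open>c = b(i := 0)\<close> unfolding lift_state_def by auto
      ultimately show ?thesis by simp
    qed
    then show ?case using step.IH by (meson rtranclp_trans)
  qed
  have P3: "attractors m n h = (\<lambda>\<omega>. {lift_state m \<omega>}) ` W"
    if AW: "attractors (\<lambda>_. 1) n f = (\<lambda>\<omega>. {\<omega>}) ` W" for W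
  proof -
    have Wfp: "is_fixed_point (\<lambda>_. 1) n f w" if w: "w \<in> W" for w
    proof -
      have att: "is_attractor (\<lambda>_. 1) n f {w}" using AW w unfolding attractors_def by blast
      then have wb: "w \<in> bool_states n" unfolding is_attractor_def by blast
      have "f w j = w j" if j: "j < n" for j
      proof (rule ccontr)
        assume ne: "f w j \<noteq> w j"
        define w' where "w' = w(j := (if w j < f w j then w j + 1 else w j - 1))"
        have "async_step (\<lambda>_. 1) n f w w'" unfolding async_step_def w'_def using wb j ne by auto
        then have "w' \<in> {w}" using att unfolding is_attractor_def by blast
        moreover have "w' j \<noteq> w j" unfolding w'_def using ne by auto
        ultimately show False by auto
      qed
      then show ?thesis using wb unfolding is_fixed_point_def by blast
    qed
    show ?thesis
    proof
      show "attractors m n h \<subseteq> (\<lambda>\<omega>. {lift_state m \<omega>}) ` W"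
      proof
        fix A assume "A \<in> attractors m n h"
        then have A: "is_attractor m n h A" unfolding attractors_def by blast
        then obtain x where x: "x \<in> A" unfolding is_attractor_def by blast
        have xX: "x \<in> ?X" using A x unfolding is_attractor_def by blast
        obtain y where y: "reach m n h x y" "y \<in> ?X" "\<forall>k<n. y k = 0 \<or> y k = m k"
          using push[OF nn xX, of n] h_def by auto
        obtain \<omega> where w: "\<omega> \<in> bool_states n" and yw: "y = lift_state m \<omega>"
          using extreme_lift[OF y(2,3) m_pos] by blast
        have fb: "\<forall>x\<in>bool_states n. \<forall>j<n. f x j \<le> (\<lambda>_. 1::nat) j" using f_bool by simp
        obtain B where B: "is_attractor (\<lambda>_. 1) n f B" "B \<subseteq> {z. reach (\<lambda>_. 1) n f \<omega> z}"
          using exists_attr[OF fin_bool fb w] by blast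
        then obtain v where v: "v \<in> W" "B = {v}" using AW unfolding attractors_def by blast
        have "reach (\<lambda>_. 1) n f \<omega> v" using B(2) v(2) by blast
        then have "reach m n h x (lift_state m v)" using simul y(1) yw by (meson rtranclp_trans)
        then have lv: "lift_state m v \<in> A" using A x unfolding is_attractor_def by blast
        have fpv: "is_fixed_point m n h (lift_state m v)" using P1 Wfp v(1) by blast
        have "A = {lift_state m v}"
        proof
          show "A \<subseteq> {lift_state m v}"
          proof
            fix z assume "z \<in> A"
            then have "reach m n h (lift_state m v) z" using A lv unfolding is_attractor_def by blast
            then show "z \<in> {lift_state m v}" using fp_reach[OF fpv] by blast
          qed
        qed (use lv in auto)
        then show "A \<in> (\<lambda>\<omega>. {lift_state m \<omega>}) ` W" using v(1) by blast
      qed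
    next
      show "(\<lambda>\<omega>. {lift_state m \<omega>}) ` W \<subseteq> attractors m n h"
      proof
        fix A assume "A \<in> (\<lambda>\<omega>. {lift_state m \<omega>}) ` W"
        then obtain w where w: "w \<in> W" "A = {lift_state m w}" by blast
        have fpv: "is_fixed_point m n h (lift_state m w)" using P1 Wfp w(1) by blast
        then have "lift_state m w \<in> ?X" unfolding is_fixed_point_def by blast
        then show "A \<in> attractors m n h"
          unfolding attractors_def is_attractor_def using w(2) fp_reach[OF fpv] by auto
      qed
    qed
  qed
  show ?thesis using P1 P2 P3 by blast
qed

end
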